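(* In the incremental implementation of Algorithm 2(b) below, for each receiver $j$ and each slot $t$, at the end of slot $t$: for every vector $\mathbf{u}=(u_1,\dots,u_{Q(t)})$ in the row space $U_j(t)$ of the matrix $B_j$, the linear combination $\sum_{i=1}^{Q(t)}u_i\mathbf{p}_i$ is known to receiver $j$, where $\mathbf{p}_i$ denotes the $i$-th packet in the sender's queue at the end of slot $t$ and $Q(t)$ is the queue length.
   Context: Setting: a sender broadcasts to $n$ receivers over a slotted packet erasure broadcast channel; packets are vectors over $\mathbb{F}_q$; each slot packets may arrive at the sender; the sender transmits at most one linear combination of queued packets per slot; each receiver receives it or suffers an erasure, and perfect feedback tells the sender which receivers received it. A node has seen a packet $\mathbf{p}$ if it can compute $\mathbf{p}+\mathbf{q}$ with $\mathbf{q}$ a linear combination of packets that arrived after $\mathbf{p}$. Incremental implementation of Algorithm 2(b): (1) Initialize matrices $B_1,\dots,B_n$ as empty. In each slot: (2) append the $a$ newly arrived packets to the end of the queue and append $a$ all-zero columns on the right of each $B_j$; (3) if the queue is nonempty, compute a linear combination $\mathbf{g}$ of queued packets (by a coding module) and transmit it; (4) for each receiver $j$ that received the transmission, add the coefficient vector of $\mathbf{g}$ with respect to the current queue contents as a new row of $B_j$ and perform Gaussian elimination (bringing $B_j$ to reduced row echelon form); (5) let $S_j'$ be the set of queued packets corresponding to pivot columns of $B_j$ and $S_\Delta'=\bigcap_jS_j'$; replace each $B_j$ by the submatrix obtained by deleting the columns in $S_\Delta'$ and the corresponding pivot rows; (6) drop the packets in $S_\Delta'$ from the queue. Columns of $B_j$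 are never rearranged, so column $i$ of $B_j$ corresponds to the $i$-th packet in the queue. *)

theory Defs
  imports "HOL-Analysis.Finite_Cartesian_Product"
begin

text \<open>Packets are vectors in 'f ^ 'm over a finite field 'f (playing the role of F_q).
Rows of the matrices B_j are lists of field elements; column i corresponds to the i-th
queued packet.\<close>

record ('f, 'm) state =
  queue :: "('f ^ 'm) list"
  Bmat  :: "nat \<Rightarrow> 'f list list"
  rcvd  :: "nat \<Rightarrow> ('f ^ 'm) list"

definition init_state :: "('f::zero, 'm::finite) state" where
  "init_state = \<lparr>queue = [], Bmat = (\<lambda>j. []), rcvd = (\<lambda>j. [])\<rparr>"

definition rowspace :: "nat \<Rightarrow> 'f::field list list \<Rightarrow> 'f list set" where
  "rowspace k M = {u. length u = k \<and>
     (\<exists>a::nat \<Rightarrow> 'f. \<forall>i<k. u ! i = (\<Sum>r<length M. a r * (M ! r) ! i))}"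

definition pivot :: "'f::zero list \<Rightarrow> nat" where
  "pivot r = (LEAST i. i < length r \<and> r ! i \<noteq> 0)"

definition pivots :: "'f::zero list list \<Rightarrow> nat set" where
  "pivots M = pivot ` set M"

definition is_rref :: "nat \<Rightarrow> 'f::field list list \<Rightarrow> bool" where
  "is_rref k M \<longleftrightarrow>
     (\<forall>r\<in>set M. length r = k \<and> (\<exists>i<k. r ! i \<noteq> 0) \<and> r ! pivot r = 1) \<and>
     sorted_wrt (\<lambda>r s. pivot r < pivot s) M \<and>
     (\<forall>a<length M. \<forall>b<length M. a \<noteq> b \<longrightarrow> (M ! b) ! pivot (M ! a) = 0)"

text \<open>M' is the result of Gaussian elimination applied to M (the RREF is unique).\<close>
definition rref_of :: "nat \<Rightarrow> 'f::field list list \<Rightarrow> 'f list list \<Rightarrow> bool" where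
  "rref_of k M M' \<longleftrightarrow> is_rref k M' \<and> rowspace k M' = rowspace k M"

definition knows :: "('f::field ^ 'm) list \<Rightarrow> 'f ^ 'm \<Rightarrow> bool" where
  "knows rs v \<longleftrightarrow> (\<exists>a::nat \<Rightarrow> 'f. v = (\<Sum>r<length rs. a r *s rs ! r))"

text \<open>One slot of the incremental implementation of Algorithm 2(b), with n receivers.
arr: packets arriving in this slot; c: coefficients chosen by the coding module
(g = sum of c i times the i-th queued packet); R: set of receivers that receive the
transmission (the others suffer an erasure).\<close>
definition slot_step ::
  "nat \<Rightarrow> ('f::field ^ 'm) list \<Rightarrow> (nat \<Rightarrow> 'f) \<Rightarrow> nat set \<Rightarrow> ('f, 'm::finite) state \<Rightarrow> ('f, 'm) state \<Rightarrow> bool"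
where
  "slot_step n arr c R s s' \<longleftrightarrow>
    (let q1 = queue s @ arr;
         k = length q1;
         B1 = (\<lambda>j. map (\<lambda>r. r @ replicate (length arr) 0) (Bmat s j));
         cv = map c [0..<k];
         g = (\<Sum>i<k. c i *s q1 ! i);
         tx = (q1 \<noteq> [])
     in \<exists>B2 :: nat \<Rightarrow> 'f list list.
          (\<forall>j<n. if tx \<and> j \<in> R then rref_of k (B1 j @ [cv]) (B2 j) else B2 j = B1 j) \<and>
          (let S = (\<Inter>j\<in>{..<n}. pivots (B2 j)) in
             queue s' = nths q1 (- S) \<and>
             (\<forall>j<n. Bmat s' j = map (\<lambda>r. nths r (- S)) (filter (\<lambda>r. pivot r \<notin> S) (B2 j))) \<and>
             (\<forall>j<n. rcvd s' j = (if tx \<and> j \<in> R then rcvd s j @ [g] else rcvd s j))))"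

end

theory Submission imports Defs begin

lemma smult_sum: "(c::'f::field) *s (\<Sum>i\<in>A. f i) = (\<Sum>i\<in>A. c *s f i)"
  by (simp add: vec_eq_iff sum_distrib_left)

lemma sum_smult: "(\<Sum>i\<in>A. f i) *s (v::'f::field^'m) = (\<Sum>i\<in>A. f i *s v)"
  by (simp add: vec_eq_iff sum_distrib_right)

lemma knows_add: "knows rs v \<Longrightarrow> knows rs w \<Longrightarrow> knows rs (v + w)"
  unfolding knows_def
  apply clarify
  subgoal for a b by (rule exI[of _ "\<lambda>r. a r + b r"]) (simp add: vector_sadd_rdistrib sum.distrib)
  done

lemma knows_smult: "knows rs v \<Longrightarrow> knows rs (x *s v)"
  unfolding knows_def
  apply clarify
  subgoal for a by (rule exI[of _ "\<lambda>r. x * a r"]) (simp add: smult_sum vector_smult_assoc)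
  done

lemma knows_zero: "knows rs 0"
  unfolding knows_def by (rule exI[of _ "\<lambda>_. 0"]) simp

lemma knows_sum: "(\<And>i. i \<in> A \<Longrightarrow> knows rs (f i)) \<Longrightarrow> knows rs (\<Sum>i\<in>A. f i)"
  apply (induction A rule: infinite_finite_induct)
  by (auto simp: knows_zero knows_add)

lemma knows_append: "knows rs v \<Longrightarrow> knows (rs @ xs) v"
  unfolding knows_def
proof clarify
  fix a
  show "\<exists>b. (\<Sum>r<length rs. a r *s rs ! r) = (\<Sum>r<length (rs @ xs). b r *s (rs @ xs) ! r)"
  proof (rule exI[of _ "\<lambda>r. if r < length rs then a r else 0"])
    show "(\<Sum>r<length rs. a r *s rs ! r) = (\<Sum>r<length (rs @ xs). (if r < length rs then a r else 0) *s (rs @ xs) ! r)"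
      by (rule sum.mono_neutral_cong_left) (auto simp: nth_append)
  qed
qed

lemma knows_last: "knows (rs @ [g]) g"
  unfolding knows_def
proof (rule exI[of _ "\<lambda>r. if r = length rs then 1 else 0"])
  have "(\<Sum>r<length (rs @ [g]). (if r = length rs then 1 else 0) *s (rs @ [g]) ! r)
     = (\<Sum>r<Suc (length rs). if r = length rs then g else 0)"
    by (rule sum.cong) auto
  also have "\<dots> = g" by (simp add: sum.delta)
  finally show "g = (\<Sum>r<length (rs @ [g]). (if r = length rs then 1 else 0) *s (rs @ [g]) ! r)" by simp
qed

lemma knows_rowspace:
  assumes "\<And>r. r \<in> set M \<Longrightarrow> knows rs (\<Sum>i<k. r ! i *s q ! i)"
    and "u \<in> rowspace k M"
  shows "knows rs (\<Sum>i<k. u ! i *s q ! i)"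
proof -
  obtain a where a: "\<forall>i<k. u ! i = (\<Sum>r<length M. a r * (M ! r) ! i)"
    using assms(2) unfolding rowspace_def by auto
  have "(\<Sum>i<k. u ! i *s q ! i) = (\<Sum>i<k. \<Sum>r<length M. a r *s ((M ! r) ! i *s q ! i))"
    by (intro sum.cong) (auto simp: a sum_smult vector_smult_assoc)
  also have "\<dots> = (\<Sum>r<length M. a r *s (\<Sum>i<k. (M ! r) ! i *s q ! i))"
    by (subst sum.swap) (simp add: smult_sum)
  finally show ?thesis
    by (auto intro!: knows_sum knows_smult assms(1))
qed

definition good :: "nat \<Rightarrow> 'f::field list list \<Rightarrow> bool" where
  "good k M \<longleftrightarrow> (\<forall>r\<in>set M. length r = k \<and> (\<exists>i<k. r ! i \<noteq> 0) \<and>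
      (\<forall>r'\<in>set M. r' \<noteq> r \<longrightarrow> r' ! pivot r = 0))"

lemma pivot_props:
  assumes "\<exists>i<length r. r ! i \<noteq> (0::'a::zero)"
  shows "pivot r < length r \<and> r ! pivot r \<noteq> 0 \<and> (\<forall>i<pivot r. r ! i = 0)"
proof -
  have "pivot r < length r \<and> r ! pivot r \<noteq> 0"
    unfolding pivot_def using LeastI_ex[OF assms] .
  moreover have "\<forall>i<pivot r. r ! i = 0"
  proof (intro allI impI)
    fix i assume "i < pivot r"
    with calculation have "i < length r" by simp
    from \<open>i < pivot r\<close> have "\<not> (i < length r \<and> r ! i \<noteq> 0)"
      unfolding pivot_def by (rule not_less_Least)
    with \<open>i < length r\<close> show "r ! i = 0" by simp
  qed
  ultimately show ?thesis by blast
qed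

lemma pivot_eqI:
  assumes "p < length r" "r ! p \<noteq> (0::'a::zero)" "\<forall>i<p. r ! i = 0"
  shows "pivot r = p"
  unfolding pivot_def
proof (rule Least_equality)
  show "p < length r \<and> r ! p \<noteq> 0" using assms by simp
  fix y assume "y < length r \<and> r ! y \<noteq> 0"
  then show "p \<le> y" using assms(3) by (meson not_le)
qed

lemma nths_conv: "nths xs A = map ((!) xs) (filter (\<lambda>i. i \<in> A) [0..<length xs])"
proof (induction xs rule: rev_induct)
  case Nil then show ?case by simp
next
  case (snoc x xs)
  have "map ((!) (xs @ [x])) (filter (\<lambda>i. i \<in> A) [0..<length xs])
      = map ((!) xs) (filter (\<lambda>i. i \<in> A) [0..<length xs])"
    by (rule map_cong) (auto simp: nth_append)
  then show ?case using snoc by (simp add: nths_append)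
qed

lemma good_rref: "is_rref k M \<Longrightarrow> good k M"
  unfolding is_rref_def good_def
  by (metis in_set_conv_nth)

lemma pivot_append_zeros:
  assumes "\<exists>i<length r. r ! i \<noteq> (0::'a::zero)"
  shows "pivot (r @ replicate a 0) = pivot r"
  using pivot_props[OF assms]
  by (intro pivot_eqI) (auto simp: nth_append)

lemma good_append_zeros:
  assumes "good k M"
  shows "good (k + a) (map (\<lambda>r. r @ replicate a 0) M)"
  unfolding good_def
proof (rule ballI, intro conjI)
  fix r' assume "r' \<in> set (map (\<lambda>r. r @ replicate a 0) M)"
  then obtain r where r: "r \<in> set M" "r' = r @ replicate a 0" by auto
  have lr: "length r = k" and nz: "\<exists>i<k. r ! i \<noteq> 0" using assms r unfolding good_def by auto
  show "length r' = k + a" using r lr by simp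
  show "\<exists>i<k + a. r' ! i \<noteq> 0" using nz r lr by (auto simp: nth_append)
  have pv: "pivot r' = pivot r" using r pivot_append_zeros[of r a] nz lr by auto
  have pl: "pivot r < k" using pivot_props[of r] nz lr by auto
  show "\<forall>s'\<in>set (map (\<lambda>r. r @ replicate a 0) M). s' \<noteq> r' \<longrightarrow> s' ! pivot r' = 0"
  proof (intro ballI impI)
    fix s' assume "s' \<in> set (map (\<lambda>r. r @ replicate a 0) M)" "s' \<noteq> r'"
    then obtain s where s: "s \<in> set M" "s' = s @ replicate a 0" "s \<noteq> r" using r by auto
    have "length s = k" using s assms unfolding good_def by auto
    then show "s' ! pivot r' = 0" using s pv pl r assms unfolding good_def by (auto simp: nth_append)
  qed
qed

lemma good_zero_at_S:
  assumes "good k M" "S \<subseteq> pivots M" "r \<in> set M" "pivot r \<notin> S" "i \<in> S"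
  shows "r ! i = 0"
proof -
  obtain r0 where "r0 \<in> set M" "i = pivot r0" using assms unfolding pivots_def by auto
  then show ?thesis using assms unfolding good_def by metis
qed

lemma del_good:
  assumes "good k M" "S \<subseteq> pivots M"
  defines "ks \<equiv> filter (\<lambda>i. i \<notin> S) [0..<k]"
  shows "good (length ks) (map (\<lambda>r. map ((!) r) ks) (filter (\<lambda>r. pivot r \<notin> S) M))"
  unfolding good_def
proof (rule ballI, intro conjI)
  have srt: "sorted_wrt (<) ks" unfolding ks_def by (simp add: sorted_wrt_filter)
  fix nr assume "nr \<in> set (map (\<lambda>r. map ((!) r) ks) (filter (\<lambda>r. pivot r \<notin> S) M))"
  then obtain r where r: "r \<in> set M" "pivot r \<notin> S" "nr = map ((!) r) ks" by auto
  have lr: "length r = k" and nz: "\<exists>i<k. r ! i \<noteq> 0" using assms r unfolding good_def by auto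
  have pp: "pivot r < k" "r ! pivot r \<noteq> 0" "\<forall>i<pivot r. r ! i = 0"
    using pivot_props[of r] nz lr by auto
  have "pivot r \<in> set ks" unfolding ks_def using pp r by auto
  then obtain m where m: "m < length ks" "ks ! m = pivot r" by (auto simp: in_set_conv_nth)
  show "length nr = length ks" using r by simp
  have pnr: "pivot nr = m"
  proof (rule pivot_eqI)
    show "m < length nr" using m r by simp
    show "nr ! m \<noteq> 0" using m r pp by simp
    show "\<forall>i<m. nr ! i = 0"
    proof (intro allI impI)
      fix i assume "i < m"
      then have "ks ! i < ks ! m" using srt m sorted_wrt_nth_less by blast
      then show "nr ! i = 0" using r m pp \<open>i < m\<close> by simp
    qed
  qed
  show "\<exists>i<length ks. nr ! i \<noteq> 0" using m r pp by auto
  show "\<forall>ns\<in>set (map (\<lambda>r. map ((!) r) ks) (filter (\<lambda>r. pivot r \<notin> S) M)). ns \<noteq> nr \<longrightarrow> ns ! pivot nr = 0"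
  proof (intro ballI impI)
    fix ns assume "ns \<in> set (map (\<lambda>r. map ((!) r) ks) (filter (\<lambda>r. pivot r \<notin> S) M))" "ns \<noteq> nr"
    then obtain s where s: "s \<in> set M" "ns = map ((!) s) ks" "s \<noteq> r" using r by auto
    have "s ! pivot r = 0" using s r assms(1) unfolding good_def by blast
    then show "ns ! pivot nr = 0" using s pnr m by simp
  qed
qed

lemma del_sum:
  assumes "good k M" "S \<subseteq> pivots M" "r \<in> set M" "pivot r \<notin> S" "length q = k"
  defines "ks \<equiv> filter (\<lambda>i. i \<notin> S) [0..<k]"
  shows "(\<Sum>m<length ks. map ((!) r) ks ! m *s map ((!) q) ks ! m) = (\<Sum>i<k. r ! i *s q ! i)"
proof -
  define f where "f i = r ! i *s q ! i" for i
  have "(\<Sum>m<length ks. map ((!) r) ks ! m *s map ((!) q) ks ! m) = (\<Sum>m<length ks. map f ks ! m)"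
    by (rule sum.cong) (auto simp: f_def)
  also have "\<dots> = sum_list (map f ks)"
    by (simp add: sum_list_sum_nth atLeast0LessThan)
  also have "\<dots> = sum f (set ks)"
    by (rule sum_list_distinct_conv_sum_set) (simp add: ks_def)
  also have "\<dots> = sum f {..<k}"
  proof (rule sum.mono_neutral_left)
    show "set ks \<subseteq> {..<k}" unfolding ks_def by auto
    show "\<forall>i\<in>{..<k} - set ks. f i = 0"
      using good_zero_at_S[OF assms(1,2,3,4)] unfolding ks_def f_def by auto
  qed simp
  finally show ?thesis by (simp add: f_def)
qed

lemma in_rowspace_row:
  assumes "r \<in> set M" "length r = k"
  shows "r \<in> rowspace k M"
proof -
  obtain p where p: "p < length M" "M ! p = r" using assms(1) by (auto simp: in_set_conv_nth)
  have A: "\<forall>i<k. r ! i = (\<Sum>x<length M. (if x = p then 1 else 0) * (M ! x) ! i)"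
  proof (intro allI impI)
    fix i
    have "(\<Sum>x<length M. (if x = p then 1 else 0) * (M ! x) ! i) = (\<Sum>x<length M. if x = p then (M ! x) ! i else 0)"
      by (rule sum.cong) auto
    also have "\<dots> = r ! i" using p by (simp add: sum.delta)
    finally show "r ! i = (\<Sum>x<length M. (if x = p then 1 else 0) * (M ! x) ! i)" by simp
  qed
  show ?thesis unfolding rowspace_def mem_Collect_eq
    by (rule conjI[OF assms(2) exI[where P="\<lambda>a. \<forall>i<k. r ! i = (\<Sum>x<length M. a x * (M ! x) ! i)", OF A]])
qed

definition slot_inv :: "nat \<Rightarrow> ('f::field, 'm::finite) state \<Rightarrow> bool" where
  "slot_inv n s \<longleftrightarrow> (\<forall>j<n. good (length (queue s)) (Bmat s j) \<and>
     (\<forall>r\<in>set (Bmat s j). knows (rcvd s j) (\<Sum>i<length (queue s). r ! i *s queue s ! i)))"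

lemma step_inv:
  assumes st: "slot_step n arr c R s s'" and iv: "slot_inv n s"
  shows "slot_inv n s'"
proof -
  define q1 where "q1 = queue s @ arr"
  define k where "k = length q1"
  define B1 where "B1 = (\<lambda>j. map (\<lambda>r. r @ replicate (length arr) 0) (Bmat s j))"
  define cv where "cv = map c [0..<k]"
  define g where "g = (\<Sum>i<k. c i *s q1 ! i)"
  define tx where "tx = (q1 \<noteq> [])"
  obtain B2 where B2: "\<forall>j<n. if tx \<and> j \<in> R then rref_of k (B1 j @ [cv]) (B2 j) else B2 j = B1 j"
    and rest: "let S = (\<Inter>j\<in>{..<n}. pivots (B2 j)) in
             queue s' = nths q1 (- S) \<and>
             (\<forall>j<n. Bmat s' j = map (\<lambda>r. nths r (- S)) (filter (\<lambda>r. pivot r \<notin> S) (B2 j))) \<and>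
             (\<forall>j<n. rcvd s' j = (if tx \<and> j \<in> R then rcvd s j @ [g] else rcvd s j))"
    using st unfolding slot_step_def Let_def q1_def k_def B1_def cv_def g_def tx_def by blast
  define S where "S = (\<Inter>j\<in>{..<n}. pivots (B2 j))"
  define ks where "ks = filter (\<lambda>i. i \<notin> S) [0..<k]"
  have qs': "queue s' = nths q1 (- S)"
    and bs': "\<And>j. j < n \<Longrightarrow> Bmat s' j = map (\<lambda>r. nths r (- S)) (filter (\<lambda>r. pivot r \<notin> S) (B2 j))"
    and rs': "\<And>j. j < n \<Longrightarrow> rcvd s' j = (if tx \<and> j \<in> R then rcvd s j @ [g] else rcvd s j)"
    using rest unfolding S_def Let_def by auto
  have kdef: "k = length (queue s) + length arr" unfolding k_def q1_def by simp
  have q1s': "queue s' = map ((!) q1) ks"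
    unfolding qs' nths_conv ks_def k_def by simp
  show ?thesis unfolding slot_inv_def
  proof (intro allI impI)
    fix j assume j: "j < n"
    have gs: "good (length (queue s)) (Bmat s j)"
      and ks0: "\<And>r. r \<in> set (Bmat s j) \<Longrightarrow> knows (rcvd s j) (\<Sum>i<length (queue s). r ! i *s queue s ! i)"
      using iv j unfolding slot_inv_def by auto
    have gB1: "good k (B1 j)" unfolding B1_def kdef by (rule good_append_zeros[OF gs])
    have kB1: "knows (rcvd s j) (\<Sum>i<k. r ! i *s q1 ! i)" if rin: "r \<in> set (B1 j)" for r
    proof -
      obtain r0 where r0: "r0 \<in> set (Bmat s j)" "r = r0 @ replicate (length arr) 0"
        using rin unfolding B1_def by auto
      have lr0: "length r0 = length (queue s)" using gs r0 unfolding good_def by auto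
      have "(\<Sum>i<k. r ! i *s q1 ! i) = (\<Sum>i<length (queue s). r0 ! i *s queue s ! i)"
      proof (rule sym, rule sum.mono_neutral_cong_left)
        show "{..<length (queue s)} \<subseteq> {..<k}" unfolding kdef by auto
        show "\<forall>i\<in>{..<k} - {..<length (queue s)}. r ! i *s q1 ! i = 0"
          using r0 lr0 kdef by (auto simp: nth_append)
        show "\<And>x. x \<in> {..<length (queue s)} \<Longrightarrow> r0 ! x *s queue s ! x = r ! x *s q1 ! x"
          using r0 lr0 unfolding q1_def by (auto simp: nth_append)
      qed simp
      then show ?thesis using ks0[OF r0(1)] by simp
    qed
    have gB2: "good k (B2 j) \<and> (\<forall>r\<in>set (B2 j). knows (rcvd s' j) (\<Sum>i<k. r ! i *s q1 ! i))"
    proof (cases "tx \<and> j \<in> R")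
      case True
      then have rr: "rref_of k (B1 j @ [cv]) (B2 j)" using B2 j by auto
      have g2: "good k (B2 j)" using rr unfolding rref_of_def by (auto intro: good_rref)
      have rcv: "rcvd s' j = rcvd s j @ [g]" using rs'[OF j] True by simp
      have "knows (rcvd s' j) (\<Sum>i<k. r ! i *s q1 ! i)" if "r \<in> set (B2 j)" for r
      proof -
        have "r \<in> rowspace k (B2 j)"
          using in_rowspace_row[OF that] g2 that unfolding good_def by auto
        then have rsp: "r \<in> rowspace k (B1 j @ [cv])" using rr unfolding rref_of_def by simp
        show ?thesis unfolding rcv
        proof (rule knows_rowspace[OF _ rsp])
          fix r' assume "r' \<in> set (B1 j @ [cv])"
          then consider "r' \<in> set (B1 j)" | "r' = cv" by auto
          then show "knows (rcvd s j @ [g]) (\<Sum>i<k. r' ! i *s q1 ! i)"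
          proof cases
            case 1 then show ?thesis using kB1 knows_append by blast
          next
            case 2
            have "(\<Sum>i<k. r' ! i *s q1 ! i) = g"
              unfolding 2 g_def cv_def by (rule sum.cong) auto
            then show ?thesis using knows_last by simp
          qed
        qed
      qed
      then show ?thesis using g2 by blast
    next
      case False
      then have "B2 j = B1 j" using B2 j by auto
      moreover have "knows (rcvd s' j) v" if "knows (rcvd s j) v" for v
        using rs'[OF j] that knows_append by (cases "tx \<and> j \<in> R") auto
      ultimately show ?thesis using gB1 kB1 by auto
    qed
    have Ssub: "S \<subseteq> pivots (B2 j)" unfolding S_def using j by auto
    have lq1: "length q1 = k" unfolding k_def by simp
    have bs'': "Bmat s' j = map (\<lambda>r. map ((!) r) ks) (filter (\<lambda>r. pivot r \<notin> S) (B2 j))"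
      unfolding bs'[OF j]
      by (rule map_cong) (use gB2 in \<open>auto simp: nths_conv ks_def good_def\<close>)
    have lqs': "length (queue s') = length ks" unfolding q1s' by simp
    show "good (length (queue s')) (Bmat s' j) \<and>
       (\<forall>r\<in>set (Bmat s' j). knows (rcvd s' j) (\<Sum>i<length (queue s'). r ! i *s queue s' ! i))"
    proof
      show "good (length (queue s')) (Bmat s' j)"
        unfolding lqs' bs'' ks_def using del_good[of k "B2 j" S] gB2 Ssub by blast
      show "\<forall>r\<in>set (Bmat s' j). knows (rcvd s' j) (\<Sum>i<length (queue s'). r ! i *s queue s' ! i)"
      proof
        fix nr assume "nr \<in> set (Bmat s' j)"
        then obtain r where r: "r \<in> set (B2 j)" "pivot r \<notin> S" "nr = map ((!) r) ks"
          unfolding bs'' by auto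
        have "(\<Sum>i<length (queue s'). nr ! i *s queue s' ! i) = (\<Sum>i<k. r ! i *s q1 ! i)"
          using del_sum[OF _ Ssub r(1,2) lq1] gB2 by (simp add: q1s' r(3) ks_def)
        then show "knows (rcvd s' j) (\<Sum>i<length (queue s'). nr ! i *s queue s' ! i)"
          using gB2 r by simp
      qed
    qed
  qed
qed

theorem theorem7:
  fixes n :: nat
    and st :: "nat \<Rightarrow> ('f::{field,finite}, 'm::finite) state"
    and arr :: "nat \<Rightarrow> ('f ^ 'm) list"
    and c :: "nat \<Rightarrow> nat \<Rightarrow> 'f"
    and R :: "nat \<Rightarrow> nat set"
  assumes "st 0 = init_state"
    and "\<And>t. slot_step n (arr (Suc t)) (c (Suc t)) (R (Suc t)) (st t) (st (Suc t))"
    and "j < n"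
    and "u \<in> rowspace (length (queue (st t))) (Bmat (st t) j)"
  shows "knows (rcvd (st t) j) (\<Sum>i<length (queue (st t)). u ! i *s queue (st t) ! i)"
proof -
  have "slot_inv n (st t)"
  proof (induction t)
    case 0 then show ?case using assms(1) by (simp add: slot_inv_def init_state_def good_def)
  next
    case (Suc t) show ?case by (rule step_inv[OF assms(2) Suc.IH])
  qed
  then have H: "\<And>r. r \<in> set (Bmat (st t) j) \<Longrightarrow>
      knows (rcvd (st t) j) (\<Sum>i<length (queue (st t)). r ! i *s queue (st t) ! i)"
    using assms(3) unfolding slot_inv_def by blast
  show ?thesis by (rule knows_rowspace[OF H assms(4)])
qed

end
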